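(* Let $n\ge1$, let $F$ be a finite field with $q$ elements, and let $M_n(F)$ be the monoid of all $n\times n$ matrices over $F$ under multiplication. If $q=2$, then the minimal degree of a faithful action of $M_n(F)$ by partial mappings is $2^n-1$. Otherwise, writing $q-1=p_1^{m_1}\cdots p_k^{m_k}$ for the prime factorization with distinct primes $p_i$, the minimal degree of a faithful action of $M_n(F)$ by partial mappings is $\frac{q^n-1}{q-1}\cdot\sum_{i=1}^kp_i^{m_i}$.
   Context: The minimal degree of a faithful action by partial mappings of a semigroup $S$ is the least $m$ such that $S$ is isomorphic to a subsemigroup of the monoid $PT_m$ of all partial maps on an $m$-element set (acting on the right). *)

theory Defs
  imports "HOL-Analysis.Analysis" "HOL-Computational_Algebra.Primes"
begin

text \<open>Partial maps on the m-element set {0..<m}, represented as maps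
  nat \<rightharpoonup> nat with domain and range inside {0..<m}.\<close>
definition partial_maps_on :: "nat \<Rightarrow> (nat \<Rightarrow> nat option) set" where
  "partial_maps_on m = {f. dom f \<subseteq> {..<m} \<and> ran f \<subseteq> {..<m}}"

text \<open>A faithful right action of the semigroup (S, op) by partial maps on an
  m-element set: an injective homomorphism into PT_m, where maps act on the right,
  so the product s t acts as first s, then t.\<close>
definition faithful_pt_action :: "'s set \<Rightarrow> ('s \<Rightarrow> 's \<Rightarrow> 's) \<Rightarrow> nat \<Rightarrow> bool" where
  "faithful_pt_action S op m \<longleftrightarrow>
     (\<exists>\<phi>. inj_on \<phi> S \<and> (\<forall>s\<in>S. \<phi> s \<in> partial_maps_on m) \<and>
          (\<forall>s\<in>S. \<forall>t\<in>S. \<phi> (op s t) = (\<phi> t \<circ>\<^sub>m \<phi> s)))"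

definition min_pt_degree :: "'s set \<Rightarrow> ('s \<Rightarrow> 's \<Rightarrow> 's) \<Rightarrow> nat" where
  "min_pt_degree S op = (LEAST m. faithful_pt_action S op m)"

end

theory Submission
  imports Defs "HOL-Algebra.Multiplicative_Group"
begin

definition tring :: "'a::field ring" where
  "tring = \<lparr>carrier = UNIV, monoid.mult = (\<lambda>x y. x * y), one = 1, ring.zero = 0, add = (\<lambda>x y. x + y)\<rparr>"

lemma tring_field: "field (tring :: 'a::field ring)"
proof -
  have "\<exists>y. x + y = 0" for x :: 'a
    using add.right_inverse by blast
  moreover have "x \<noteq> 0 \<Longrightarrow> \<exists>y. x * y = 1" for x :: 'a
    by (rule exI[of _ "inverse x"]) auto
  ultimately show ?thesis
    unfolding tring_def using add.right_inverse
    by unfold_locales (auto simp:algebra_simps Units_def)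
qed


lemma tring_pow: "x [^]\<^bsub>tring\<^esub> (n::nat) = (x::'a::field) ^ n"
  by (induction n) (auto simp: tring_def)

lemma gen_exists:
  assumes "finite (UNIV :: 'a::field set)"
  shows "\<exists>g::'a. g \<noteq> 0 \<and> (\<forall>x. x \<noteq> 0 \<longrightarrow> (\<exists>i. x = g ^ i))"
proof -
  have fc: "finite (carrier (tring :: 'a ring))" using assms by (simp add: tring_def)
  obtain a where
    a: "a \<in> carrier (mult_of (tring::'a ring))" "carrier (mult_of (tring::'a ring)) = {a[^]\<^bsub>tring\<^esub>i | i::nat . i \<in> UNIV}"
    using field.finite_field_mult_group_has_gen[OF tring_field fc] by (rule bexE)
  have z: "\<zero>\<^bsub>tring\<^esub> = (0::'a)" by (simp add: tring_def)
  have c: "carrier (tring::'a ring) = UNIV" by (simp add: tring_def)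
  have e: "UNIV - {0::'a} = {a ^ i | i::nat . i \<in> UNIV}" using a(2) unfolding mult_of_simps z c tring_pow .
  have "a \<noteq> 0" using a(1) unfolding mult_of_simps z c by simp
  moreover have "\<forall>x. x \<noteq> 0 \<longrightarrow> (\<exists>i. x = a ^ i)"
  proof (intro allI impI)
    fix x :: 'a assume "x \<noteq> 0"
    then have "x \<in> UNIV - {0}" by simp
    then show "\<exists>i. x = a ^ i" unfolding e by blast
  qed
  ultimately show ?thesis by blast
qed


lemma pow_diff_one:
  fixes g :: "'a::field"
  assumes "g \<noteq> 0" "i < j" "g ^ i = g ^ j" shows "g ^ (j - i) = 1"
proof -
  have "g ^ j = g ^ i * g ^ (j - i)" using assms(2) by (simp add: power_add[symmetric])
  then have "g ^ i * g ^ (j - i) = g ^ i * 1" using assms(3) by simp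
  then show ?thesis using assms(1) by (simp del: mult_1_right)
qed

lemma gen_mod:
  fixes g :: "'a::field"
  assumes fin: "finite (UNIV :: 'a set)" and g0: "g \<noteq> 0" and gen: "\<forall>x. x \<noteq> 0 \<longrightarrow> (\<exists>i. x = g ^ i)"
  shows "CARD('a) - 1 > 0 \<and> (\<forall>a b. g ^ a = g ^ b \<longleftrightarrow> a mod (CARD('a) - 1) = b mod (CARD('a) - 1))"
proof -
  define N where "N = CARD('a) - 1"
  have cardnz: "card (UNIV - {0::'a}) = N" using fin by (simp add: N_def card_Diff_singleton)
  have "\<not> inj_on (\<lambda>i. g ^ i) {..N}"
  proof
    assume inj: "inj_on (\<lambda>i. g ^ i) {..N}"
    have "(\<lambda>i. g ^ i) ` {..N} \<subseteq> UNIV - {0}" using g0 by auto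
    from card_inj_on_le[OF inj this] fin cardnz show False by simp
  qed
  then obtain i j where ij: "i \<le> N" "j \<le> N" "i \<noteq> j" "g ^ i = g ^ j" unfolding inj_on_def by auto
  have ex: "\<exists>d. 0 < d \<and> g ^ d = 1"
  proof (cases "i < j")
    case True
    then show ?thesis using pow_diff_one[OF g0 True] ij by (intro exI[of _ "j - i"]) auto
  next
    case False
    then have "j < i" using ij by simp
    then show ?thesis using pow_diff_one[OF g0 \<open>j < i\<close>] ij by (intro exI[of _ "i - j"]) auto
  qed
  define d where "d = (LEAST d. 0 < d \<and> g ^ d = 1)"
  have d: "0 < d" "g ^ d = 1" using LeastI_ex[OF ex] unfolding d_def by auto
  have dmin: "\<And>e. 0 < e \<Longrightarrow> e < d \<Longrightarrow> g ^ e \<noteq> 1" unfolding d_def using not_less_Least by blast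
  have red: "g ^ a = g ^ (a mod d)" for a
  proof -
    have "g ^ a = g ^ (d * (a div d) + a mod d)" by simp
    also have "\<dots> = (g ^ d) ^ (a div d) * g ^ (a mod d)" by (simp only: power_add power_mult)
    finally show ?thesis using d by simp
  qed
  have inj: "a < d \<Longrightarrow> b < d \<Longrightarrow> g ^ a = g ^ b \<Longrightarrow> a = b" for a b
  proof (rule ccontr)
    assume *: "a < d" "b < d" "g ^ a = g ^ b" "a \<noteq> b"
    show False
    proof (cases "a < b")
      case True
      have "g ^ (b - a) = 1" using pow_diff_one[OF g0 True] * by simp
      then show False using dmin[of "b - a"] True * by simp
    next
      case False
      then have "b < a" using * by simp
      have "g ^ (a - b) = 1" using pow_diff_one[OF g0 \<open>b < a\<close>] * by simp
      then show False using dmin[of "a - b"] \<open>b < a\<close> * by simp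
    qed
  qed
  have eqv: "g ^ a = g ^ b \<longleftrightarrow> a mod d = b mod d" for a b
    using red[of a] red[of b] inj[of "a mod d" "b mod d"] d(1) by auto
  have img: "(\<lambda>i. g ^ i) ` {..<d} = UNIV - {0}"
  proof
    show "(\<lambda>i. g ^ i) ` {..<d} \<subseteq> UNIV - {0}" using g0 by auto
    show "UNIV - {0} \<subseteq> (\<lambda>i. g ^ i) ` {..<d}"
    proof
      fix x assume "x \<in> UNIV - {0::'a}"
      then obtain i where "x = g ^ i" using gen by auto
      then have "x = g ^ (i mod d)" using red by simp
      then show "x \<in> (\<lambda>i. g ^ i) ` {..<d}" using d(1) by auto
    qed
  qed
  have "inj_on (\<lambda>i. g ^ i) {..<d}" using inj by (auto simp: inj_on_def)
  then have "card ((\<lambda>i. g ^ i) ` {..<d}) = d" by (simp add: card_image)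
  then have "d = N" using img cardnz by simp
  then show ?thesis using eqv d(1) unfolding N_def by auto
qed


lemma dvd_div_prime_lemma:
  fixes d N p :: nat
  assumes N: "N > 0" and dN: "d dvd N" and p: "prime p" "p dvd N"
    and nd: "\<not> d dvd (N div p)"
  shows "p ^ multiplicity p N dvd d"
proof (rule ccontr)
  assume npd: "\<not> p ^ multiplicity p N dvd d"
  have d0: "d \<noteq> 0" using dN N by auto
  have Np: "N = p * (N div p)" using p by simp
  have M0: "N div p \<noteq> 0" using N p(2) Np by (metis mult_0_right neq0_conv)
  have p0: "p \<noteq> 0" using p by auto
  have "d dvd (N div p)"
  proof (rule multiplicity_le_imp_dvd[OF d0])
    fix q :: nat assume q: "prime q"
    have mN: "multiplicity q N = multiplicity q p + multiplicity q (N div p)"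
      using prime_elem_multiplicity_mult_distrib[of q p "N div p"] q p0 M0 Np by simp
    show "multiplicity q d \<le> multiplicity q (N div p)"
    proof (cases "q = p")
      case True
      have "multiplicity p d < multiplicity p N"
        using npd multiplicity_dvd'[of "multiplicity p N" p d] by linarith
      then show ?thesis using mN True p by simp
    next
      case False
      have "multiplicity q d \<le> multiplicity q N" using dvd_imp_multiplicity_le[OF dN] N by simp
      then show ?thesis using mN prime_multiplicity_other[OF q p(1) False] by simp
    qed
  qed
  then show False using nd by simp
qed

lemma sum_le_prod_nat:
  fixes h :: "'b \<Rightarrow> nat"
  assumes "finite A" "\<forall>x\<in>A. h x \<ge> 2"
  shows "sum h A \<le> prod h A \<and> (sum h A = 0 \<or> prod h A \<ge> 2)"
  using assms
proof (induction A rule: finite_induct)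
  case empty then show ?case by simp
next
  case (insert x F)
  then have hx: "h x \<ge> 2" and IH: "sum h F \<le> prod h F \<and> (sum h F = 0 \<or> prod h F \<ge> 2)" by auto
  have P0: "prod h F > 0" using insert(4) by (intro prod_pos) auto
  have S: "sum h (insert x F) = h x + sum h F" using insert(1,2) by simp
  have Pr: "prod h (insert x F) = h x * prod h F" using insert(1,2) by simp
  show ?case
  proof (cases "sum h F = 0")
    case True
    have a: "h x * prod h F \<ge> h x * 1" using P0 by (intro mult_le_mono2) simp
    have b: "h x * 1 \<ge> 2" using hx by simp
    show ?thesis unfolding S Pr using True a b by linarith
  next
    case False
    then have P2: "prod h F \<ge> 2" using IH by auto
    have a: "h x * prod h F \<ge> 2 * prod h F" using hx by (intro mult_le_mono1)
    have b: "h x * prod h F \<ge> h x * 2" using P2 by (intro mult_le_mono2)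
    show ?thesis unfolding S Pr using a b IH hx by linarith
  qed
qed

lemma prod_prime_powers_dvd:
  fixes x :: nat and m :: "nat \<Rightarrow> nat"
  assumes "finite A" "\<forall>p\<in>A. prime p" "\<forall>p\<in>A. p ^ m p dvd x"
  shows "(\<Prod>p\<in>A. p ^ m p) dvd x"
  using assms
proof (induction A rule: finite_induct)
  case empty then show ?case by simp
next
  case (insert p F)
  have cop: "coprime (p ^ m p) (\<Prod>q\<in>F. q ^ m q)"
  proof (rule prod_coprime_right)
    fix q assume "q \<in> F"
    then have "prime q" "prime p" "p \<noteq> q" using insert by auto
    then show "coprime (p ^ m p) (q ^ m q)" by (simp add: primes_coprime)
  qed
  show ?case using insert cop by (simp add: divides_mult)
qed


lemma funpow_in: "f ` Y \<subseteq> Y \<Longrightarrow> y \<in> Y \<Longrightarrow> (f ^^ k) y \<in> Y"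
  by (induction k) auto

lemma funpow_inj: "inj_on f Y \<Longrightarrow> f ` Y \<subseteq> Y \<Longrightarrow> inj_on (f ^^ k) Y"
proof (induction k)
  case 0 then show ?case by simp
next
  case (Suc k)
  have "inj_on (f ^^ k \<circ> f) Y"
    by (rule comp_inj_on) (use Suc inj_on_subset in auto)
  then show ?case by (simp only: funpow_Suc_right)
qed

lemma funpow_comm: "(f ^^ a) ((f ^^ b) y) = (f ^^ b) ((f ^^ a) y)"
  by (metis funpow_add add.commute comp_apply)

lemma funpow_add_app: "(f ^^ (a + b)) y = (f ^^ a) ((f ^^ b) y)"
  by (simp add: funpow_add)

definition spp :: "nat \<Rightarrow> nat" where
  "spp N = (\<Sum>p\<in>prime_factors N. p ^ multiplicity p N)"

lemma perm_bound_gen: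
  assumes "finite Y" "f ` Y \<subseteq> Y" "inj_on f Y" "N > 0" "\<forall>y\<in>Y. (f ^^ N) y = y"
    "P \<subseteq> prime_factors N" "\<forall>p\<in>P. \<exists>y\<in>Y. (f ^^ (N div p)) y \<noteq> y"
  shows "(\<Sum>p\<in>P. p ^ multiplicity p N) \<le> card Y"
  using assms
proof (induction "card Y" arbitrary: Y P rule: less_induct)
  case less
  note fin = less.prems(1) and fY = less.prems(2) and inj = less.prems(3) and N = less.prems(4)
    and fN = less.prems(5) and PN = less.prems(6) and wit = less.prems(7)
  show ?case
  proof (cases "P = {}")
    case True then show ?thesis by simp
  next
    case False
    then obtain p0 where p0: "p0 \<in> P" by auto
    then obtain y0 where y0: "y0 \<in> Y" "(f ^^ (N div p0)) y0 \<noteq> y0" using wit by auto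
    have ex: "\<exists>k. 0 < k \<and> (f ^^ k) y0 = y0" using fN y0 N by auto
    define per where "per = (LEAST k. 0 < k \<and> (f ^^ k) y0 = y0)"
    have per: "0 < per" "(f ^^ per) y0 = y0" using LeastI_ex[OF ex] unfolding per_def by auto
    have permin: "\<And>e. 0 < e \<Longrightarrow> e < per \<Longrightarrow> (f ^^ e) y0 \<noteq> y0"
      unfolding per_def using not_less_Least by blast
    have permul: "(f ^^ (per * m)) y0 = y0" for m
    proof (induction m)
      case 0 then show ?case by simp
    next
      case (Suc m)
      have "(f ^^ (per * Suc m)) y0 = (f ^^ per) ((f ^^ (per * m)) y0)"
        by (simp add: funpow_add_app[symmetric])
      then show ?case using Suc per by simp
    qed
    have permod: "(f ^^ k) y0 = (f ^^ (k mod per)) y0" for k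
    proof -
      have "(f ^^ k) y0 = (f ^^ (k mod per + per * (k div per))) y0" by simp
      also have "\<dots> = (f ^^ (k mod per)) ((f ^^ (per * (k div per))) y0)" by (rule funpow_add_app)
      finally show ?thesis using permul by simp
    qed
    have perdvd: "(f ^^ k) y0 = y0 \<longleftrightarrow> per dvd k" for k
    proof
      assume "(f ^^ k) y0 = y0"
      then have "(f ^^ (k mod per)) y0 = y0" using permod by simp
      then have "k mod per = 0" using permin[of "k mod per"] per(1) by (meson mod_less_divisor neq0_conv)
      then show "per dvd k" by auto
    next
      assume "per dvd k"
      then show "(f ^^ k) y0 = y0" using permul by auto
    qed
    define Orb where "Orb = (\<lambda>k. (f ^^ k) y0) ` {..<per}"
    have OY: "Orb \<subseteq> Y" unfolding Orb_def using funpow_in[OF fY y0(1)] by auto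
    have inO: "(f ^^ k) y0 \<in> Orb" for k
      unfolding Orb_def using permod[of k] per(1) by (intro image_eqI[of _ _ "k mod per"]) auto
    have y0O: "y0 \<in> Orb" using inO[of 0] by simp
    have cardO: "card Orb = per"
    proof -
      have "inj_on (\<lambda>k. (f ^^ k) y0) {..<per}"
      proof (rule inj_onI, rule ccontr)
        fix a b assume ab: "a \<in> {..<per}" "b \<in> {..<per}" "(f ^^ a) y0 = (f ^^ b) y0" "a \<noteq> b"
        have gen: "False" if "a < b" "a < per" "b < per" "(f ^^ a) y0 = (f ^^ b) y0" for a b
        proof -
          have "(f ^^ a) ((f ^^ (b - a)) y0) = (f ^^ a) y0"
            using that by (simp add: funpow_add_app[symmetric])
          then have "(f ^^ (b - a)) y0 = y0"
            using inj_onD[OF funpow_inj[OF inj fY, of a]] funpow_in[OF fY y0(1)] y0(1) by blast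
          then show False using permin[of "b - a"] that by simp
        qed
        show False
        proof (cases "a < b")
          case True then show False using gen[of a b] ab by auto
        next
          case False then have "b < a" using ab by simp
          then show False using gen[of b a] ab by auto
        qed
      qed
      then show ?thesis unfolding Orb_def by (simp add: card_image)
    qed
    have Osame: "z \<in> Orb \<Longrightarrow> (f ^^ j) z = z \<longleftrightarrow> (f ^^ j) y0 = y0" for z j
    proof -
      assume "z \<in> Orb"
      then obtain k where k: "z = (f ^^ k) y0" unfolding Orb_def by auto
      have "(f ^^ j) z = (f ^^ k) ((f ^^ j) y0)" using k funpow_comm by metis
      then show ?thesis
        using k inj_onD[OF funpow_inj[OF inj fY, of k]] funpow_in[OF fY y0(1)] y0(1) by metis
    qed
    have fYO: "f ` (Y - Orb) \<subseteq> Y - Orb"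
    proof
      fix w assume "w \<in> f ` (Y - Orb)"
      then obtain z where z: "z \<in> Y" "z \<notin> Orb" "w = f z" by auto
      have "f z \<notin> Orb"
      proof
        assume "f z \<in> Orb"
        then obtain k where k: "f z = (f ^^ k) y0" unfolding Orb_def by auto
        have "(f ^^ k) y0 = (f ^^ (k + per)) y0" using permod[of k] permod[of "k + per"] by simp
        also have "\<dots> = f ((f ^^ (k + per - 1)) y0)"
          using per(1) by (metis Suc_diff_1 add_gr_0 funpow.simps(2) comp_apply)
        finally have "z = (f ^^ (k + per - 1)) y0"
          using k inj_onD[OF inj] z(1) funpow_in[OF fY y0(1)] by metis
        then show False using z(2) inO by simp
      qed
      then show "w \<in> Y - Orb" using z fY by auto
    qed
    define P1 where "P1 = {p\<in>P. (f ^^ (N div p)) y0 \<noteq> y0}"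
    define P2 where "P2 = P - P1"
    have finP: "finite P" using PN finite_subset by blast
    have P2bound: "(\<Sum>p\<in>P2. p ^ multiplicity p N) \<le> card (Y - Orb)"
    proof (rule less.hyps)
      show "card (Y - Orb) < card Y" by (rule psubset_card_mono) (use fin y0O y0(1) in auto)
      show "finite (Y - Orb)" using fin by simp
      show "f ` (Y - Orb) \<subseteq> Y - Orb" by (rule fYO)
      show "inj_on f (Y - Orb)" using inj by (rule inj_on_subset) auto
      show "0 < N" by (rule N)
      show "\<forall>y\<in>Y - Orb. (f ^^ N) y = y" using fN by auto
      show "P2 \<subseteq> prime_factors N" using PN unfolding P2_def by auto
      show "\<forall>p\<in>P2. \<exists>y\<in>Y - Orb. (f ^^ (N div p)) y \<noteq> y"
      proof
        fix p assume "p \<in> P2"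
        then have "p \<in> P" "(f ^^ (N div p)) y0 = y0" unfolding P2_def P1_def by auto
        then obtain y where "y \<in> Y" "(f ^^ (N div p)) y \<noteq> y" using wit by auto
        moreover have "y \<notin> Orb" using Osame \<open>(f ^^ (N div p)) y0 = y0\<close> calculation by blast
        ultimately show "\<exists>y\<in>Y - Orb. (f ^^ (N div p)) y \<noteq> y" by auto
      qed
    qed
    have P1dvd: "\<forall>p\<in>P1. p ^ multiplicity p N dvd per"
    proof
      fix p assume "p \<in> P1"
      then have p: "p \<in> prime_factors N" "(f ^^ (N div p)) y0 \<noteq> y0" using PN unfolding P1_def by auto
      have "per dvd N" using perdvd fN y0(1) by blast
      moreover have "\<not> per dvd (N div p)" using perdvd p(2) by blast
      moreover have "prime p" "p dvd N" using p(1) by (auto simp: in_prime_factors_imp_prime in_prime_factors_imp_dvd)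
      ultimately show "p ^ multiplicity p N dvd per"
        using dvd_div_prime_lemma[OF N] by blast
    qed
    have finP1: "finite P1" using finP unfolding P1_def by simp
    have "(\<Sum>p\<in>P1. p ^ multiplicity p N) \<le> (\<Prod>p\<in>P1. p ^ multiplicity p N)"
    proof -
      have "\<forall>p\<in>P1. p ^ multiplicity p N \<ge> 2"
      proof
        fix p assume "p \<in> P1"
        then have "prime p" "multiplicity p N > 0" using PN unfolding P1_def
          by (auto simp: prime_factors_multiplicity)
        then show "p ^ multiplicity p N \<ge> 2"
        proof -
          assume pr: "prime p" "multiplicity p N > 0"
          have "p ^ 1 \<le> p ^ multiplicity p N" using pr prime_ge_1_nat by (intro power_increasing) auto
          then show ?thesis using prime_ge_2_nat[OF pr(1)] by simp
        qed
      qed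
      then show ?thesis using sum_le_prod_nat[OF finP1, of "\<lambda>p. p ^ multiplicity p N"] by blast
    qed
    also have "\<dots> \<le> per"
    proof (rule dvd_imp_le)
      show "(\<Prod>p\<in>P1. p ^ multiplicity p N) dvd per"
      proof (rule prod_prime_powers_dvd[OF finP1])
        show "\<forall>p\<in>P1. prime p" using PN unfolding P1_def by (auto simp: in_prime_factors_imp_prime)
        show "\<forall>p\<in>P1. p ^ multiplicity p N dvd per" by (rule P1dvd)
      qed
      show "0 < per" by (rule per(1))
    qed
    finally have P1bound: "(\<Sum>p\<in>P1. p ^ multiplicity p N) \<le> card Orb" using cardO by simp
    have "(\<Sum>p\<in>P. p ^ multiplicity p N) = (\<Sum>p\<in>P1. p ^ multiplicity p N) + (\<Sum>p\<in>P2. p ^ multiplicity p N)"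
      using sum.subset_diff[of P1 P "\<lambda>p. p ^ multiplicity p N"] finP unfolding P2_def P1_def by (simp add: add.commute)
    also have "\<dots> \<le> card Orb + card (Y - Orb)" using P1bound P2bound by simp
    also have "\<dots> = card Y"
    proof -
      have "card (Y - Orb) = card Y - card Orb" by (rule card_Diff_subset) (use finite_subset[OF OY fin] OY in auto)
      moreover have "card Orb \<le> card Y" by (rule card_mono[OF fin OY])
      ultimately show ?thesis by linarith
    qed
    finally show ?thesis .
  qed
qed

lemma perm_bound:
  assumes "finite Y" "f ` Y \<subseteq> Y" "inj_on f Y" "N > 0" "\<forall>y\<in>Y. (f ^^ N) y = y"
    "\<forall>p\<in>prime_factors N. \<exists>y\<in>Y. (f ^^ (N div p)) y \<noteq> y"
  shows "spp N \<le> card Y"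
  unfolding spp_def using perm_bound_gen[OF assms(1-5) order_refl assms(6)] .


definition line :: "'a::field ^ 'n \<Rightarrow> ('a ^ 'n) set" where
  "line v = {c *s v | c. c \<noteq> 0}"

definition Lines :: "('a::field ^ 'n) set set" where
  "Lines = {line v | v. v \<noteq> 0}"

definition rep :: "('a::field ^ 'n) set \<Rightarrow> 'a ^ 'n" where
  "rep l = (SOME v. v \<in> l)"

lemma vec_nz_comp: "(v::'a::field ^ 'n) \<noteq> 0 \<Longrightarrow> \<exists>i. v $ i \<noteq> 0"
  by (simp add: vec_eq_iff)

lemma smult_cancel_vec: "(v::'a::field ^ 'n) \<noteq> 0 \<Longrightarrow> c *s v = d *s v \<Longrightarrow> c = d"
proof -
  assume v: "v \<noteq> 0" and e: "c *s v = d *s v"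
  obtain i where i: "v $ i \<noteq> 0" using vec_nz_comp[OF v] by auto
  have "c * v $ i = d * v $ i" using e by (metis vector_smult_component)
  then show "c = d" using i by simp
qed

lemma smult_nz: "(v::'a::field ^ 'n) \<noteq> 0 \<Longrightarrow> c \<noteq> 0 \<Longrightarrow> c *s v \<noteq> 0"
  by (metis vector_smult_component vec_nz_comp mult_eq_0_iff zero_index)

lemma smult_smult_vec: "c *s (d *s (v::'a::field ^ 'n)) = (c * d) *s v"
  by (simp add: vec_eq_iff mult.assoc)

lemma line_self: "(v::'a::field ^ 'n) \<noteq> 0 \<Longrightarrow> v \<in> line v"
  unfolding line_def by (auto intro: exI[of _ 1])

lemma line_nz: "(v::'a::field ^ 'n) \<noteq> 0 \<Longrightarrow> w \<in> line v \<Longrightarrow> w \<noteq> 0"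
  unfolding line_def using smult_nz by auto

lemma line_smult: "c \<noteq> 0 \<Longrightarrow> line (c *s (v::'a::field ^ 'n)) = line v"
proof
  assume c: "c \<noteq> 0"
  show "line (c *s v) \<subseteq> line v"
    unfolding line_def using c by (auto simp: smult_smult_vec)
  show "line v \<subseteq> line (c *s v)"
  proof
    fix w assume "w \<in> line v"
    then obtain d where d: "d \<noteq> 0" "w = d *s v" unfolding line_def by auto
    have "w = (d / c) *s (c *s v)" using d c by (simp add: smult_smult_vec)
    then have "\<exists>e. w = e *s (c *s v) \<and> e \<noteq> 0" using d c by (intro exI[of _ "d / c"]) auto
    then show "w \<in> line (c *s v)" unfolding line_def by simp
  qed
qed

lemma line_mem: "w \<in> line (v::'a::field ^ 'n) \<Longrightarrow> line w = line v"
proof -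
  assume "w \<in> line v"
  then obtain c where "c \<noteq> 0" "w = c *s v" unfolding line_def by auto
  then show ?thesis using line_smult by metis
qed

lemma Lines_nz: "l \<in> Lines \<Longrightarrow> (x::'a::field ^ 'n) \<in> l \<Longrightarrow> x \<noteq> 0"
  unfolding Lines_def using line_nz by blast

lemma rep_props:
  assumes "l \<in> (Lines :: ('a::field ^ 'n) set set)"
  shows "rep l \<in> l" "rep l \<noteq> 0" "line (rep l) = l"
proof -
  obtain v where v: "v \<noteq> 0" "l = line v" using assms unfolding Lines_def by auto
  then have "v \<in> l" using line_self by auto
  then show r: "rep l \<in> l" unfolding rep_def by (rule someI)
  then show "rep l \<noteq> 0" using Lines_nz assms by blast
  show "line (rep l) = l" using line_mem r v by auto
qed

lemma line_in_Lines: "(v::'a::field ^ 'n) \<noteq> 0 \<Longrightarrow> line v \<in> Lines"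
  unfolding Lines_def by auto

lemma rep_line_coef: "(v::'a::field ^ 'n) \<noteq> 0 \<Longrightarrow> \<exists>c. c \<noteq> 0 \<and> v = c *s rep (line v)"
proof -
  assume v: "v \<noteq> 0"
  have "rep (line v) \<in> line v" using rep_props(1)[OF line_in_Lines[OF v]] .
  then obtain d where d: "d \<noteq> 0" "rep (line v) = d *s v" unfolding line_def by auto
  then have "v = (1 / d) *s rep (line v)" by (simp add: smult_smult_vec)
  then show ?thesis using d by (intro exI[of _ "1 / d"]) auto
qed

lemma card_line:
  assumes "finite (UNIV :: 'a::field set)" "(v::'a ^ 'n) \<noteq> 0"
  shows "card (line v) = CARD('a) - 1"
proof -
  have "line v = (\<lambda>c. c *s v) ` (UNIV - {0})" unfolding line_def by auto
  moreover have "inj_on (\<lambda>c. c *s v) (UNIV - {0})" using smult_cancel_vec[OF assms(2)] by (auto simp: inj_on_def)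
  ultimately show ?thesis using assms(1) by (simp add: card_image card_Diff_singleton)
qed

lemma card_Lines:
  assumes fin: "finite (UNIV :: 'a::field set)"
  shows "card (Lines :: ('a ^ 'n) set set) = (CARD('a) ^ CARD('n) - 1) div (CARD('a) - 1)"
    "finite (Lines :: ('a ^ 'n) set set)"
proof -
  have "CARD('a ^ 'n) > 0" using fin by (simp add: finite_UNIV_card_ge_0)
  then have finV: "finite (UNIV :: ('a ^ 'n) set)" using card_ge_0_finite by blast
  have U: "\<Union>(Lines :: ('a ^ 'n) set set) = UNIV - {0}"
    unfolding Lines_def using line_self line_nz by blast
  show finL: "finite (Lines :: ('a ^ 'n) set set)"
    using finV by (metis Pow_UNIV finite_Pow_iff finite_subset top_greatest)
  have q1: "CARD('a) - 1 > 0"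
  proof -
    have "{0::'a, 1} \<subseteq> UNIV" by simp
    then have "card {0::'a, 1} \<le> CARD('a)" using fin card_mono by blast
    then show ?thesis by simp
  qed
  have "(CARD('a) - 1) * card (Lines :: ('a ^ 'n) set set) = card (\<Union>(Lines :: ('a ^ 'n) set set))"
  proof (rule card_partition[OF finL])
    show "finite (\<Union>(Lines :: ('a ^ 'n) set set))" using finV by (rule finite_subset[rotated]) simp
    show "card c = CARD('a) - 1" if cL: "c \<in> (Lines :: ('a ^ 'n) set set)" for c
    proof -
      obtain v :: "'a ^ 'n" where "v \<noteq> 0" "c = line v" using cL unfolding Lines_def by auto
      then show ?thesis using card_line[OF fin, of v] by simp
    qed
    show "\<And>c1 c2. c1 \<in> Lines \<Longrightarrow> c2 \<in> Lines \<Longrightarrow> c1 \<noteq> c2 \<Longrightarrow> c1 \<inter> c2 = {}"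
      unfolding Lines_def using line_mem by blast
  qed
  also have "\<dots> = CARD('a ^ 'n) - 1" unfolding U using finV by (simp add: card_Diff_singleton)
  finally show "card (Lines :: ('a ^ 'n) set set) = (CARD('a) ^ CARD('n) - 1) div (CARD('a) - 1)"
    using q1 by (metis CARD_vec nonzero_mult_div_cancel_left neq0_conv)
qed

lemma vm_smult: "(c *s x) v* (A::'a::field ^ 'n ^ 'n) = c *s (x v* A)"
  by (simp add: vector_matrix_mult_def vec_eq_iff sum_distrib_left mult.assoc)

lemma vm_axis: "(axis i 1) v* (A::'a::field ^ 'n ^ 'n) = A $ i"
proof -
  have "(\<Sum>k\<in>UNIV. (if k = i then 1 else 0) * A $ k $ j) = A $ i $ j" for j
    by (simp add: if_distrib[of "\<lambda>x. x * _"] cong: if_cong)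
  then show ?thesis by (simp add: vector_matrix_mult_def vec_eq_iff axis_def)
qed

lemma vm_ext:
  assumes "\<And>l. l \<in> (Lines :: ('a::field ^ 'n) set set) \<Longrightarrow> rep l v* (A::'a ^ 'n ^ 'n) = rep l v* B"
  shows "A = B"
proof -
  have all: "v v* A = v v* B" for v :: "'a ^ 'n"
  proof (cases "v = 0")
    case True then show ?thesis by simp
  next
    case False
    then obtain c where "v = c *s rep (line v)" using rep_line_coef by blast
    then show ?thesis using assms[OF line_in_Lines[OF False]] vm_smult by metis
  qed
  show "A = B" by (metis all vm_axis vec_eq_iff)
qed


lemma faithful_from_finite:
  fixes \<psi> :: "'s \<Rightarrow> 'x \<Rightarrow> 'x option"
  assumes fin: "finite X" and inj: "inj_on \<psi> S"
    and dr: "\<forall>s\<in>S. dom (\<psi> s) \<subseteq> X \<and> ran (\<psi> s) \<subseteq> X"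
    and hom: "\<forall>s\<in>S. \<forall>t\<in>S. \<psi> (op s t) = (\<psi> t \<circ>\<^sub>m \<psi> s)"
  shows "faithful_pt_action S op (card X)"
proof -
  obtain h where h: "bij_betw h {0..<card X} X" using ex_bij_betw_nat_finite[OF fin] by blast
  define hi where "hi = inv_into {0..<card X} h"
  have hi: "bij_betw hi X {0..<card X}" unfolding hi_def by (rule bij_betw_inv_into[OF h])
  have hih: "\<And>n. n < card X \<Longrightarrow> hi (h n) = n" unfolding hi_def using h
    by (simp add: bij_betw_def inv_into_f_f)
  have hhi: "\<And>x. x \<in> X \<Longrightarrow> h (hi x) = x" unfolding hi_def using h
    by (simp add: bij_betw_def f_inv_into_f)
  have hX: "\<And>n. n < card X \<Longrightarrow> h n \<in> X" using h by (auto simp: bij_betw_def)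
  have hiX: "\<And>x. x \<in> X \<Longrightarrow> hi x < card X" using hi by (auto simp: bij_betw_def)
  define \<phi> where "\<phi> s = (\<lambda>n. if n < card X then map_option hi (\<psi> s (h n)) else None)" for s
  have ranX: "\<And>s x y. s \<in> S \<Longrightarrow> \<psi> s x = Some y \<Longrightarrow> y \<in> X" using dr by (auto simp: ran_def)
  have domX: "\<And>s x. s \<in> S \<Longrightarrow> x \<notin> X \<Longrightarrow> \<psi> s x = None" using dr by (meson domIff subsetD)
  show ?thesis unfolding faithful_pt_action_def
  proof (intro exI[of _ \<phi>] conjI ballI)
    show "inj_on \<phi> S"
    proof (rule inj_onI)
      fix s t assume st: "s \<in> S" "t \<in> S" "\<phi> s = \<phi> t"
      have "\<psi> s x = \<psi> t x" for x
      proof (cases "x \<in> X")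
        case True
        have "\<phi> s (hi x) = \<phi> t (hi x)" using st by simp
        then have e: "map_option hi (\<psi> s x) = map_option hi (\<psi> t x)"
          unfolding \<phi>_def using True hiX hhi by simp
        show ?thesis
        proof (cases "\<psi> s x")
          case None then show ?thesis using e by simp
        next
          case (Some y)
          then obtain z where z: "\<psi> t x = Some z" "hi y = hi z" using e by (cases "\<psi> t x") auto
          have "y \<in> X" "z \<in> X" using ranX st Some z by auto
          then have "y = z" using z(2) hhi by metis
          then show ?thesis using Some z by simp
        qed
      next
        case False then show ?thesis using domX st by simp
      qed
      then have "\<psi> s = \<psi> t" by (rule ext)
      then show "s = t" using inj st by (auto simp: inj_on_def)
    qed
  next
    fix s assume s: "s \<in> S"
    have "dom (\<phi> s) \<subseteq> {..<card X}" unfolding \<phi>_def by (auto simp: dom_def split: if_splits)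
    moreover have "ran (\<phi> s) \<subseteq> {..<card X}"
      unfolding \<phi>_def using ranX[OF s] hiX by (auto simp: ran_def split: if_splits)
    ultimately show "\<phi> s \<in> partial_maps_on (card X)" unfolding partial_maps_on_def by simp
  next
    fix s t assume s: "s \<in> S" and t: "t \<in> S"
    show "\<phi> (op s t) = (\<phi> t \<circ>\<^sub>m \<phi> s)"
    proof
      fix n
      show "\<phi> (op s t) n = (\<phi> t \<circ>\<^sub>m \<phi> s) n"
      proof (cases "n < card X")
        case True
        show ?thesis
        proof (cases "\<psi> s (h n)")
          case None then show ?thesis using True hom s t unfolding \<phi>_def by (simp add: map_comp_def)
        next
          case (Some y)
          then have y: "y \<in> X" using ranX s by auto
          then show ?thesis using True hom s t Some hiX hhi unfolding \<phi>_def by (simp add: map_comp_def)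
        qed
      next
        case False then show ?thesis unfolding \<phi>_def by (simp add: map_comp_def)
      qed
    qed
  qed
qed

definition dlog :: "'a::field \<Rightarrow> 'a \<Rightarrow> nat" where
  "dlog g c = (LEAST i. g ^ i = c)"

definition coef :: "'a::field ^ 'n \<Rightarrow> 'a" where
  "coef v = (SOME c. c \<noteq> 0 \<and> v = c *s rep (line v))"

lemma coef_props: "(v::'a::field ^ 'n) \<noteq> 0 \<Longrightarrow> coef v \<noteq> 0 \<and> v = coef v *s rep (line v)"
  unfolding coef_def using someI_ex[OF rep_line_coef] by blast

lemma coef_unique: "(v::'a::field ^ 'n) \<noteq> 0 \<Longrightarrow> v = d *s rep (line v) \<Longrightarrow> coef v = d"
  using coef_props smult_cancel_vec rep_props(2) line_in_Lines by metis

definition uact :: "nat set \<Rightarrow> (nat \<Rightarrow> nat) \<Rightarrow> 'a::field \<Rightarrow> 'a ^ 'n ^ 'n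
    \<Rightarrow> (('a ^ 'n) set \<times> nat \<times> nat) \<Rightarrow> (('a ^ 'n) set \<times> nat \<times> nat) option" where
  "uact P w g A = (\<lambda>(l, p, j). if l \<in> Lines \<and> p \<in> P \<and> j < w p then
       (let v = rep l v* A in if v = 0 then None else Some (line v, p, (j + dlog g (coef v)) mod w p))
     else None)"

lemma uact_out: "\<not> (l \<in> Lines \<and> p \<in> P \<and> j < w p) \<Longrightarrow> uact P w g A (l, p, j) = None"
  unfolding uact_def by auto

lemma uact_in: "l \<in> Lines \<Longrightarrow> p \<in> P \<Longrightarrow> j < w p \<Longrightarrow> uact P w g A (l, p, j) =
  (let v = rep l v* A in if v = 0 then None else Some (line v, p, (j + dlog g (coef v)) mod w p))"
  unfolding uact_def by auto

lemma upper_bound: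
  fixes g :: "'a::field" and P :: "nat set" and w :: "nat \<Rightarrow> nat"
  assumes fin: "finite (UNIV :: 'a set)" and g0: "g \<noteq> 0" and gen: "\<forall>x. x \<noteq> 0 \<longrightarrow> (\<exists>i. x = g ^ i)"
    and gm: "\<forall>a b. g ^ a = g ^ b \<longleftrightarrow> a mod N = b mod N"
    and finP: "finite P" and Pne: "P \<noteq> {}" and wP: "\<forall>p\<in>P. w p > 0 \<and> w p dvd N"
    and crt: "\<forall>a b. (\<forall>p\<in>P. a mod w p = b mod w p) \<longrightarrow> a mod N = b mod N"
  shows "faithful_pt_action (UNIV :: ('a ^ 'n ^ 'n) set) (**) (card (Lines :: ('a ^ 'n) set set) * (\<Sum>p\<in>P. w p))"
proof -
  define X where "X = Sigma (Lines :: ('a ^ 'n) set set) (\<lambda>_. Sigma P (\<lambda>p. {..<w p}))"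
  have finL: "finite (Lines :: ('a ^ 'n) set set)" using card_Lines(2)[OF fin] .
  have cardX: "card X = card (Lines :: ('a ^ 'n) set set) * (\<Sum>p\<in>P. w p)"
    unfolding X_def using finL finP by simp
  have finX: "finite X" unfolding X_def using finL finP by auto
  have dl: "c \<noteq> 0 \<Longrightarrow> g ^ dlog g c = c" for c
    unfolding dlog_def using gen by (metis (mono_tags, lifting) LeastI_ex)
  have dlmul: "c \<noteq> 0 \<Longrightarrow> d \<noteq> 0 \<Longrightarrow> dlog g (c * d) mod N = (dlog g c + dlog g d) mod N" for c d
    using gm dl[of "c * d"] dl[of c] dl[of d] by (metis mult_eq_0_iff power_add)
  define \<psi> where "\<psi> = (uact P w g :: 'a ^ 'n ^ 'n \<Rightarrow> _)"
  have dom: "dom (\<psi> A) \<subseteq> X" for A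
    unfolding \<psi>_def uact_def X_def by (auto simp: dom_def Let_def split: if_splits)
  have ran: "ran (\<psi> A) \<subseteq> X" for A
  proof
    fix y assume "y \<in> ran (\<psi> A)"
    then obtain x where "\<psi> A x = Some y" by (auto simp: ran_def)
    then show "y \<in> X" unfolding \<psi>_def uact_def X_def using wP
      by (auto simp: Let_def line_in_Lines split: if_splits prod.splits)
  qed
  have hom: "\<psi> (A ** B) = (\<psi> B \<circ>\<^sub>m \<psi> A)" for A B :: "'a ^ 'n ^ 'n"
  proof
    fix x :: "('a ^ 'n) set \<times> nat \<times> nat"
    obtain l p j where x: "x = (l, p, j)" by (cases x) auto
    show "\<psi> (A ** B) x = (\<psi> B \<circ>\<^sub>m \<psi> A) x"
    proof (cases "l \<in> Lines \<and> p \<in> P \<and> j < w p")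
      case False then show ?thesis unfolding \<psi>_def x by (simp add: map_comp_def uact_out)
    next
      case True
      define vA where "vA = rep l v* A"
      have vAB: "rep l v* (A ** B) = vA v* B" unfolding vA_def by (simp add: vector_matrix_mul_assoc)
      show ?thesis
      proof (cases "vA = 0")
        case True2: True
        have z: "rep l v* (A ** B) = 0" using True2 vAB by simp
        show ?thesis using True True2 z unfolding \<psi>_def x by (simp add: map_comp_def uact_in Let_def vA_def)
      next
        case False
        define l' where "l' = line vA"
        define c where "c = coef vA"
        have c: "c \<noteq> 0" "vA = c *s rep l'" using coef_props[OF False] unfolding c_def l'_def by auto
        have l'L: "l' \<in> Lines" unfolding l'_def using line_in_Lines[OF False] .
        define j' where "j' = (j + dlog g c) mod w p"
        have j': "j' < w p" unfolding j'_def using wP True by simp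
        have \<psi>A: "\<psi> A x = Some (l', p, j')"
          unfolding \<psi>_def uact_def x using True False
          by (simp add: Let_def vA_def[symmetric] l'_def[symmetric] c_def[symmetric] j'_def)
        define u where "u = rep l' v* B"
        have vABu: "rep l v* (A ** B) = c *s u" unfolding vAB u_def using c(2) vm_smult by metis
        show ?thesis
        proof (cases "u = 0")
          case True
          then show ?thesis using \<psi>A \<open>l \<in> Lines \<and> p \<in> P \<and> j < w p\<close> l'L j'
            unfolding \<psi>_def uact_def x by (simp add: map_comp_def Let_def vABu u_def[symmetric])
        next
          case unz: False
          define c' where "c' = coef u"
          have c': "c' \<noteq> 0" "u = c' *s rep (line u)" using coef_props[OF unz] unfolding c'_def by auto
          have cu0: "c *s u \<noteq> 0" using smult_nz[OF unz c(1)] .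
          have lcu: "line (c *s u) = line u" using line_smult[OF c(1)] .
          have coefcu: "coef (c *s u) = c * c'"
            using coef_unique[OF cu0, of "c * c'"] lcu c'(2) by (metis smult_smult_vec)
          have md: "(j + dlog g (c * c')) mod w p = ((j + dlog g c) mod w p + dlog g c') mod w p"
          proof -
            have wN: "w p dvd N" using wP True by auto
            have "dlog g (c * c') mod N = (dlog g c + dlog g c') mod N" using dlmul c(1) c'(1) by blast
            then have "dlog g (c * c') mod w p = (dlog g c + dlog g c') mod w p"
              using wN by (metis mod_mod_cancel)
            then show ?thesis by (metis add.assoc mod_add_left_eq mod_add_right_eq)
          qed
          show ?thesis
            using \<psi>A \<open>l \<in> Lines \<and> p \<in> P \<and> j < w p\<close> l'L j' unz cu0
            unfolding \<psi>_def uact_def x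
            by (simp add: map_comp_def Let_def vABu u_def[symmetric] lcu coefcu c'_def[symmetric] md j'_def)
        qed
      qed
    qed
  qed
  have inj: "inj_on \<psi> UNIV"
  proof (rule inj_onI)
    fix A B :: "'a ^ 'n ^ 'n" assume e: "\<psi> A = \<psi> B"
    show "A = B"
    proof (rule vm_ext)
      fix l :: "('a ^ 'n) set" assume lL: "l \<in> Lines"
      define vA where "vA = rep l v* A"
      define vB where "vB = rep l v* B"
      have pt: "\<psi> A (l, p, 0) = \<psi> B (l, p, 0)" for p using e by simp
      have ev: "(if vA = 0 then None else Some (line vA, p, dlog g (coef vA) mod w p)) =
                (if vB = 0 then None else Some (line vB, p, dlog g (coef vB) mod w p))" if "p \<in> P" for p
        using pt[of p] lL that wP unfolding \<psi>_def by (auto simp: uact_in Let_def vA_def vB_def split: if_splits)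
      obtain p0 where p0: "p0 \<in> P" using Pne by auto
      show "rep l v* A = rep l v* B"
      proof (cases "vA = 0")
        case True
        then have "vB = 0" using ev[OF p0] by (auto split: if_splits)
        then show ?thesis using True unfolding vA_def vB_def by simp
      next
        case False
        then have vB0: "vB \<noteq> 0" using ev[OF p0] by (auto split: if_splits)
        have ll: "line vA = line vB" using ev[OF p0] False vB0 by simp
        have "\<forall>p\<in>P. dlog g (coef vA) mod w p = dlog g (coef vB) mod w p"
          using ev False vB0 by simp
        then have "dlog g (coef vA) mod N = dlog g (coef vB) mod N" using crt by blast
        then have "g ^ dlog g (coef vA) = g ^ dlog g (coef vB)" using gm by blast
        then have "coef vA = coef vB" using dl coef_props False vB0 by metis
        then have "vA = vB" using coef_props[OF False] coef_props[OF vB0] ll by metis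
        then show ?thesis unfolding vA_def vB_def .
      qed
    qed
  qed
  have "faithful_pt_action (UNIV :: ('a ^ 'n ^ 'n) set) (**) (card X)"
    by (rule faithful_from_finite[OF finX inj]) (use dom ran hom in auto)
  then show ?thesis using cardX by simp
qed


definition outer :: "'a::field ^ 'n \<Rightarrow> 'a ^ 'n \<Rightarrow> 'a ^ 'n ^ 'n" where
  "outer u w = (\<chi> i j. u $ i * w $ j)"

definition dotp :: "'a::field ^ 'n \<Rightarrow> 'a ^ 'n \<Rightarrow> 'a" where
  "dotp w u = (\<Sum>k\<in>UNIV. w $ k * u $ k)"

lemma outer_mult: "outer u w ** outer u' w' = outer (dotp w u' *s u) w'"
proof -
  have "(\<Sum>k\<in>UNIV. u $ i * w $ k * (u' $ k * w' $ j)) = dotp w u' * u $ i * w' $ j" for i j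
    unfolding dotp_def by (simp add: sum_distrib_left sum_distrib_right mult_ac)
  then show ?thesis by (simp add: matrix_matrix_mult_def outer_def vec_eq_iff)
qed

lemma zero_mult_mat: "(0 :: 'a::field ^ 'n ^ 'n) ** A = 0"
  by (simp add: matrix_matrix_mult_def vec_eq_iff)

lemma outer_zero: "outer 0 w = 0"
  by (simp add: outer_def vec_eq_iff)

lemma dotp_axis: "dotp w (axis j a) = w $ j * a"
proof -
  have "(\<Sum>k\<in>UNIV. w $ k * (if k = j then a else 0)) = w $ j * a"
    by (simp add: if_distrib[of "\<lambda>x. _ * x"] cong: if_cong)
  then show ?thesis by (simp add: dotp_def axis_def)
qed

lemma dotp_add: "dotp w (u + v) = dotp w u + dotp w v"
  by (simp add: dotp_def distrib_left sum.distrib)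

lemma sep_vec:
  fixes w1 w2 :: "'a::field ^ 'n"
  assumes w1: "w1 \<noteq> 0" and nm: "\<forall>c. w2 \<noteq> c *s w1"
  shows "\<exists>u. dotp w1 u = 0 \<and> dotp w2 u = 1"
proof -
  obtain k where k: "w1 $ k \<noteq> 0" using vec_nz_comp[OF w1] by auto
  define z where "z = w2 - (w2 $ k / w1 $ k) *s w1"
  have "z \<noteq> 0" using nm unfolding z_def by (metis eq_iff_diff_eq_0)
  then obtain j where j: "z $ j \<noteq> 0" using vec_nz_comp by auto
  have zk: "z $ k = 0" unfolding z_def using k by simp
  then have jk: "j \<noteq> k" using j by auto
  define a where "a = 1 / z $ j"
  define b where "b = - w1 $ j * a / w1 $ k"
  define u where "u = axis j a + axis k b"
  have "dotp w1 u = w1 $ j * a + w1 $ k * b" unfolding u_def by (simp add: dotp_add dotp_axis)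
  also have "\<dots> = 0" unfolding b_def using k by simp
  finally have 1: "dotp w1 u = 0" .
  have "dotp w2 u = w2 $ j * a + w2 $ k * b" unfolding u_def by (simp add: dotp_add dotp_axis)
  also have "\<dots> = a * (w2 $ j - w2 $ k * w1 $ j / w1 $ k)" unfolding b_def by (simp add: algebra_simps)
  also have "w2 $ j - w2 $ k * w1 $ j / w1 $ k = z $ j" unfolding z_def by simp
  also have "a * z $ j = 1" unfolding a_def using j by simp
  finally have 2: "dotp w2 u = 1" .
  show ?thesis using 1 2 by blast
qed

lemma unit_vec:
  fixes w :: "'a::field ^ 'n"
  assumes "w \<noteq> 0"
  shows "\<exists>u k. dotp w u = 1 \<and> u $ k \<noteq> 0 \<and> w $ k \<noteq> 0"
proof -
  obtain k where k: "w $ k \<noteq> 0" using vec_nz_comp[OF assms] by auto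
  have "dotp w (axis k (1 / w $ k)) = 1" using k by (simp add: dotp_axis)
  moreover have "axis k (1 / w $ k) $ k \<noteq> 0" using k by simp
  ultimately show ?thesis using k by blast
qed


lemma dotp_smult: "dotp w (c *s u) = c * dotp w (u :: 'a::field ^ 'n)"
  by (simp add: dotp_def sum_distrib_left mult_ac)

locale ptrep =
  fixes \<phi> :: "'a::field ^ 'n ^ 'n \<Rightarrow> nat \<Rightarrow> nat option" and m :: nat
  assumes inj: "inj_on \<phi> UNIV" and pm: "\<forall>A. \<phi> A \<in> partial_maps_on m"
    and hom: "\<forall>A B. \<phi> (A ** B) = (\<phi> B \<circ>\<^sub>m \<phi> A)"
begin

definition Fix :: "'a ^ 'n ^ 'n \<Rightarrow> nat set" where
  "Fix A = {x. \<phi> A x = Some x}"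

lemma app_hom: "\<phi> (A ** B) x = (case \<phi> A x of None \<Rightarrow> None | Some y \<Rightarrow> \<phi> B y)"
  using hom by (simp add: map_comp_def)

lemma fix0: "x \<in> Fix 0 \<Longrightarrow> \<phi> A x = Some x"
proof -
  assume x: "x \<in> Fix 0"
  have "\<phi> 0 x = \<phi> (0 ** A) x" by (simp add: zero_mult_mat)
  then show ?thesis using x app_hom[of 0 A x] by (simp add: Fix_def)
qed

lemma fix_sub: "E ** E2 = E \<Longrightarrow> Fix E \<subseteq> Fix E2"
proof
  fix x assume e: "E ** E2 = E" and x: "x \<in> Fix E"
  have "\<phi> E x = \<phi> (E ** E2) x" using e by simp
  then show "x \<in> Fix E2" using x app_hom[of E E2 x] by (simp add: Fix_def)
qed

lemma fix_disj: "E ** E' = 0 \<Longrightarrow> Fix E \<inter> Fix E' \<subseteq> Fix 0"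
proof
  fix x assume e: "E ** E' = 0" and x: "x \<in> Fix E \<inter> Fix E'"
  have "\<phi> 0 x = \<phi> (E ** E') x" using e by simp
  then show "x \<in> Fix 0" using x app_hom[of E E' x] by (simp add: Fix_def)
qed

lemma Fix_bound: "Fix A \<subseteq> {..<m}"
  using pm unfolding partial_maps_on_def Fix_def by (auto simp: dom_def)

lemma line_part:
  fixes u w :: "'a ^ 'n" and g :: 'a
  assumes d: "dotp w u = 1" and uk: "u $ k \<noteq> 0" and wk: "w $ k \<noteq> 0"
    and g0: "g \<noteq> 0" and N: "N > 0" and gm: "\<forall>a b. g ^ a = g ^ b \<longleftrightarrow> a mod N = b mod N"
  shows "1 \<le> card (Fix (outer u w) - Fix 0)" "spp N \<le> card (Fix (outer u w) - Fix 0)"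
proof -
  define E where "E = outer u w"
  define G where "G c = outer (c *s u) w" for c
  define Y where "Y = Fix E - Fix 0"
  have GG: "G c ** G e = G (c * e)" for c e
    unfolding G_def outer_mult by (simp add: dotp_smult d smult_smult_vec mult.commute)
  have G1: "G 1 = E" unfolding G_def E_def by simp
  have EG: "E ** G c = G c" "G c ** E = G c" for c using GG[of 1 c] GG[of c 1] G1 by auto
  have Ginj: "G c = E \<Longrightarrow> c = 1" for c
  proof -
    assume "G c = E"
    then have "G c $ k $ k = E $ k $ k" by simp
    then have "c * u $ k * w $ k = u $ k * w $ k" unfolding G_def E_def outer_def by simp
    then show "c = 1" using uk wk by simp
  qed
  have G0: "G 0 \<noteq> E"
  proof
    assume "G 0 = E"
    then have "E $ k $ k = G 0 $ k $ k" by simp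
    also have "G 0 $ k $ k = 0" unfolding G_def by (simp add: outer_def)
    finally have "E $ k $ k = 0" .
    then show False using uk wk unfolding E_def outer_def by simp
  qed
  have finY: "finite Y" unfolding Y_def using Fix_bound finite_subset by blast
  have e1: "c \<noteq> 0 \<Longrightarrow> x \<in> Y \<Longrightarrow> \<exists>y\<in>Y. \<phi> (G c) x = Some y" for c x
  proof -
    assume c: "c \<noteq> 0" and x: "x \<in> Y"
    have "\<phi> (G c ** G (inverse c)) x = Some x" using GG[of c "inverse c"] c G1 x unfolding Y_def Fix_def by simp
    then obtain y where y: "\<phi> (G c) x = Some y" "\<phi> (G (inverse c)) y = Some x"
      using app_hom[of "G c" "G (inverse c)" x] by (cases "\<phi> (G c) x") auto
    have "\<phi> E y = Some y" using app_hom[of "G c" E x] EG(2)[of c] y(1) by simp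
    moreover have "y \<notin> Fix 0"
    proof
      assume "y \<in> Fix 0"
      then have "\<phi> (G (inverse c)) y = Some y" by (rule fix0)
      then have "x = y" using y(2) by simp
      then show False using x \<open>y \<in> Fix 0\<close> unfolding Y_def by simp
    qed
    ultimately show ?thesis using y(1) unfolding Y_def Fix_def by auto
  qed
  have e2: "(\<forall>y\<in>Y. \<phi> (G c) y = Some y) \<Longrightarrow> G c = E" for c
  proof -
    assume h: "\<forall>y\<in>Y. \<phi> (G c) y = Some y"
    have "\<phi> (G c) x = \<phi> E x" for x
    proof (cases "\<phi> E x")
      case None
      then show ?thesis using app_hom[of E "G c" x] EG(1)[of c] by simp
    next
      case (Some y)
      have EE: "E ** E = E" using EG(1)[of 1] G1 by simp
      have "\<phi> E y = Some y" using app_hom[of E E x] EE Some by simp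
      then have "\<phi> (G c) y = Some y" using h fix0 unfolding Y_def Fix_def by blast
      then show ?thesis using app_hom[of E "G c" x] EG(1)[of c] Some by simp
    qed
    then have "\<phi> (G c) = \<phi> E" by (rule ext)
    then show "G c = E" using inj by (simp add: inj_on_def)
  qed
  show "1 \<le> card Y"
  proof (rule ccontr)
    assume "\<not> 1 \<le> card Y"
    then have "card Y = 0" by linarith
    then have "Y = {}" using finY by simp
    then have "G 0 = E" using e2 by blast
    then show False using G0 by simp
  qed
  define f where "f y = the (\<phi> (G g) y)" for y
  have fY: "f ` Y \<subseteq> Y" unfolding f_def using e1[OF g0] by force
  have fpow: "y \<in> Y \<Longrightarrow> \<phi> (G (g ^ k)) y = Some ((f ^^ k) y)" for y k
  proof (induction k)
    case 0 then show ?case using G1 unfolding Y_def Fix_def by simp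
  next
    case (Suc k)
    then have "(f ^^ k) y \<in> Y" using funpow_in[OF fY] by blast
    then obtain z where z: "z \<in> Y" "\<phi> (G g) ((f ^^ k) y) = Some z" using e1[OF g0] by blast
    have "\<phi> (G (g ^ Suc k)) y = \<phi> (G (g ^ k) ** G g) y" using GG by (simp add: mult.commute)
    also have "\<dots> = \<phi> (G g) ((f ^^ k) y)" using app_hom Suc by simp
    finally show ?case using z unfolding f_def by simp
  qed
  have finj: "inj_on f Y"
  proof (rule inj_onI)
    fix y1 y2 assume y: "y1 \<in> Y" "y2 \<in> Y" "f y1 = f y2"
    have h1: "\<phi> (G g ** G (inverse g)) yi = \<phi> (G (inverse g)) (f yi)" if "yi \<in> Y" for yi
      using app_hom[of "G g" "G (inverse g)" yi] fpow[OF that, of 1] by simp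
    have h2: "\<phi> (G g ** G (inverse g)) yi = Some yi" if "yi \<in> Y" for yi
      using GG[of g "inverse g"] g0 G1 that unfolding Y_def Fix_def by simp
    have "Some y1 = Some y2" using h1[OF y(1)] h2[OF y(1)] h1[OF y(2)] h2[OF y(2)] y(3) by simp
    then show "y1 = y2" by simp
  qed
  have idiff: "(\<forall>y\<in>Y. (f ^^ k) y = y) \<longleftrightarrow> N dvd k" for k
  proof
    assume "\<forall>y\<in>Y. (f ^^ k) y = y"
    then have "G (g ^ k) = E" using e2 fpow by simp
    then have "g ^ k = g ^ 0" using Ginj by simp
    then show "N dvd k" using gm[rule_format, of k 0] by (simp add: dvd_eq_mod_eq_0)
  next
    assume "N dvd k"
    then have "g ^ k = 1" using gm[rule_format, of k 0] by simp
    show "\<forall>y\<in>Y. (f ^^ k) y = y"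
    proof
      fix y assume y: "y \<in> Y"
      have "\<phi> (G (g ^ k)) y = Some ((f ^^ k) y)" by (rule fpow[OF y])
      moreover have "\<phi> (G (g ^ k)) y = Some y" using \<open>g ^ k = 1\<close> G1 y unfolding Y_def Fix_def by simp
      ultimately show "(f ^^ k) y = y" by simp
    qed
  qed
  show "spp N \<le> card Y"
  proof (rule perm_bound[OF finY fY finj N])
    show "\<forall>y\<in>Y. (f ^^ N) y = y" using idiff by simp
    show "\<forall>p\<in>prime_factors N. \<exists>y\<in>Y. (f ^^ (N div p)) y \<noteq> y"
    proof
      fix p assume p: "p \<in> prime_factors N"
      then have "prime p" "p dvd N" by (auto simp: prime_factors_dvd)
      have p1: "1 < p" using \<open>prime p\<close> by (rule prime_gt_1_nat)
      have a: "N div p < N" using div_less_dividend[OF p1 N] .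
      have "N div p \<noteq> 0" using \<open>p dvd N\<close> N by (simp add: dvd_div_eq_0_iff)
      then have b: "0 < N div p" by simp
      have "\<not> N dvd (N div p)" using nat_dvd_not_less[OF b a] .
      then show "\<exists>y\<in>Y. (f ^^ (N div p)) y \<noteq> y" using idiff by blast
    qed
  qed
qed

end


context ptrep
begin

lemma lower:
  fixes g :: 'a
  assumes fin: "finite (UNIV :: 'a set)" and g0: "g \<noteq> 0" and N: "N > 0"
    and gm: "\<forall>a b. g ^ a = g ^ b \<longleftrightarrow> a mod N = b mod N"
  shows "card (Lines :: ('a ^ 'n) set set) * max 1 (spp N) \<le> m"
proof -
  define U where "U l = (SOME u. \<exists>k. dotp (rep l) u = 1 \<and> u $ k \<noteq> 0 \<and> rep l $ k \<noteq> 0)" for l :: "('a ^ 'n) set"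
  have Uprop: "\<exists>k. dotp (rep l) (U l) = 1 \<and> U l $ k \<noteq> 0 \<and> rep l $ k \<noteq> 0" if "l \<in> Lines" for l
    unfolding U_def using someI_ex[OF unit_vec[OF rep_props(2)[OF that]]] .
  define Y where "Y l = Fix (outer (U l) (rep l)) - Fix 0" for l
  have bound: "max 1 (spp N) \<le> card (Y l)" if lL: "l \<in> Lines" for l
  proof -
    obtain k where k: "dotp (rep l) (U l) = 1" "U l $ k \<noteq> 0" "rep l $ k \<noteq> 0" using Uprop[OF lL] by blast
    show ?thesis using line_part[OF k g0 N gm] unfolding Y_def by simp
  qed
  have disj: "Y l1 \<inter> Y l2 = {}" if l: "l1 \<in> Lines" "l2 \<in> Lines" "l1 \<noteq> l2" for l1 l2
  proof -
    define w1 where "w1 = rep l1"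
    define w2 where "w2 = rep l2"
    have w1: "w1 \<noteq> 0" "line w1 = l1" unfolding w1_def using rep_props l by auto
    have w2: "w2 \<noteq> 0" "line w2 = l2" unfolding w2_def using rep_props l by auto
    have nm: "\<forall>c. w2 \<noteq> c *s w1"
    proof
      fix c show "w2 \<noteq> c *s w1"
      proof
        assume e: "w2 = c *s w1"
        then have "c \<noteq> 0" using w2 by auto
        then have "line w2 = line w1" using e line_smult by metis
        then show False using w1 w2 l by simp
      qed
    qed
    obtain u' where u': "dotp w1 u' = 0" "dotp w2 u' = 1" using sep_vec[OF w1(1) nm] by blast
    have "outer (U l1) w1 ** outer u' w2 = 0" using u' by (simp add: outer_mult outer_zero)
    then have a: "Fix (outer (U l1) w1) \<inter> Fix (outer u' w2) \<subseteq> Fix 0" by (rule fix_disj)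
    have "outer (U l2) w2 ** outer u' w2 = outer (U l2) w2" using u' by (simp add: outer_mult)
    then have b: "Fix (outer (U l2) w2) \<subseteq> Fix (outer u' w2)" by (rule fix_sub)
    show ?thesis using a b unfolding Y_def w1_def w2_def by blast
  qed
  have finL: "finite (Lines :: ('a ^ 'n) set set)" using card_Lines(2)[OF fin] .
  have finY: "\<forall>l\<in>Lines. finite (Y l)" unfolding Y_def using Fix_bound finite_subset by blast
  have "card (Lines :: ('a ^ 'n) set set) * max 1 (spp N) \<le> (\<Sum>l\<in>Lines. card (Y l))"
    using sum_bounded_below[of "Lines :: ('a ^ 'n) set set" "max 1 (spp N)" "\<lambda>l. card (Y l)"] bound by simp
  also have "\<dots> = card (\<Union>l\<in>Lines. Y l)" using card_UN_disjoint[OF finL finY] disj by auto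
  also have "\<dots> \<le> card {..<m}"
    by (rule card_mono) (use Fix_bound in \<open>auto simp: Y_def\<close>)
  finally show ?thesis by simp
qed

end


lemma crt_pp:
  fixes N a b :: nat
  assumes N: "N > 0" and h: "\<forall>p\<in>prime_factors N. a mod (p ^ multiplicity p N) = b mod (p ^ multiplicity p N)"
  shows "a mod N = b mod N"
proof -
  have PN: "(\<Prod>p\<in>prime_factors N. p ^ multiplicity p N) = N"
    using prod_prime_factors[of N] N by simp
  have gen: "x mod N = y mod N" if xy: "x \<le> y" "\<forall>p\<in>prime_factors N. x mod (p ^ multiplicity p N) = y mod (p ^ multiplicity p N)" for x y :: nat
  proof -
    have "\<forall>p\<in>prime_factors N. p ^ multiplicity p N dvd (y - x)"
    proof
      fix p assume "p \<in> prime_factors N"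
      with xy(2) have "x mod (p ^ multiplicity p N) = y mod (p ^ multiplicity p N)" by (rule bspec)
      then have "y mod (p ^ multiplicity p N) = x mod (p ^ multiplicity p N)" by (rule sym)
      then show "p ^ multiplicity p N dvd (y - x)" using mod_eq_dvd_iff_nat[OF xy(1)] by (rule iffD1[rotated])
    qed
    moreover have "\<forall>p\<in>prime_factors N. prime p" using in_prime_factors_imp_prime by blast
    ultimately have "(\<Prod>p\<in>prime_factors N. p ^ multiplicity p N) dvd (y - x)"
      using prod_prime_powers_dvd[of "prime_factors N" "\<lambda>p. multiplicity p N" "y - x"] by blast
    then have "N dvd (y - x)" using PN by simp
    then have "y mod N = x mod N" using mod_eq_dvd_iff_nat[OF xy(1)] by (rule iffD2[rotated])
    then show ?thesis by (rule sym)
  qed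
  show ?thesis
  proof (cases "a \<le> b")
    case True show ?thesis by (rule gen[OF True h])
  next
    case False
    then have ba: "b \<le> a" by simp
    have h': "\<forall>p\<in>prime_factors N. b mod (p ^ multiplicity p N) = a mod (p ^ multiplicity p N)"
    proof
      fix p assume "p \<in> prime_factors N"
      with h have "a mod (p ^ multiplicity p N) = b mod (p ^ multiplicity p N)" by (rule bspec)
      then show "b mod (p ^ multiplicity p N) = a mod (p ^ multiplicity p N)" by (rule sym)
    qed
    have "b mod N = a mod N" using gen[OF ba h'] .
    then show ?thesis by (rule sym)
  qed
qed

theorem corollary2p14:
  fixes F :: "'a::field itself" and N :: "'n::finite itself"
  assumes "finite (UNIV :: 'a set)"
  shows "min_pt_degree (UNIV :: ('a ^ 'n ^ 'n) set) (**) =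
    (if CARD('a) = 2 then 2 ^ CARD('n) - 1
     else ((CARD('a) ^ CARD('n) - 1) div (CARD('a) - 1)) *
          (\<Sum>p\<in>prime_factors (CARD('a) - 1). p ^ multiplicity p (CARD('a) - 1)))"
proof -
  note fin = assms
  obtain g :: 'a where g0: "g \<noteq> 0" and gen: "\<forall>x. x \<noteq> 0 \<longrightarrow> (\<exists>i. x = g ^ i)"
    using gen_exists[OF fin] by blast
  define M where "M = CARD('a) - 1"
  have M0: "M > 0" and gm: "\<forall>a b. g ^ a = g ^ b \<longleftrightarrow> a mod M = b mod M"
    using gen_mod[OF fin g0 gen] unfolding M_def by auto
  define T where "T = (if CARD('a) = 2 then 2 ^ CARD('n) - 1
     else ((CARD('a) ^ CARD('n) - 1) div (CARD('a) - 1)) *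
          (\<Sum>p\<in>prime_factors (CARD('a) - 1). p ^ multiplicity p (CARD('a) - 1)))"
  have cL: "card (Lines :: ('a ^ 'n) set set) = (CARD('a) ^ CARD('n) - 1) div (CARD('a) - 1)"
    using card_Lines(1)[OF fin] .
  have up: "faithful_pt_action (UNIV :: ('a ^ 'n ^ 'n) set) (**) T"
  proof (cases "CARD('a) = 2")
    case True
    then have M1: "M = 1" unfolding M_def by simp
    have "faithful_pt_action (UNIV :: ('a ^ 'n ^ 'n) set) (**) (card (Lines :: ('a ^ 'n) set set) * (\<Sum>p\<in>{0::nat}. (\<lambda>_. 1::nat) p))"
      by (rule upper_bound[OF fin g0 gen gm]) (auto simp: M1)
    then show ?thesis unfolding T_def using True cL by simp
  next
    case False
    have "M \<noteq> 1" using False M0 unfolding M_def by simp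
    then obtain p where "prime p" "p dvd M" using prime_factor_nat by blast
    then have Pne: "prime_factors M \<noteq> {}" using M0 by (auto simp: prime_factors_dvd)
    have "faithful_pt_action (UNIV :: ('a ^ 'n ^ 'n) set) (**)
            (card (Lines :: ('a ^ 'n) set set) * (\<Sum>p\<in>prime_factors M. p ^ multiplicity p M))"
    proof (rule upper_bound[OF fin g0 gen gm])
      show "finite (prime_factors M)" by simp
      show "prime_factors M \<noteq> {}" by (rule Pne)
      show "\<forall>p\<in>prime_factors M. 0 < p ^ multiplicity p M \<and> p ^ multiplicity p M dvd M"
      proof
        fix p assume "p \<in> prime_factors M"
        then have "prime p" by (simp add: in_prime_factors_imp_prime)
        then show "0 < p ^ multiplicity p M \<and> p ^ multiplicity p M dvd M"
          by (simp add: multiplicity_dvd prime_gt_0_nat)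
      qed
      show "\<forall>a b. (\<forall>p\<in>prime_factors M. a mod p ^ multiplicity p M = b mod p ^ multiplicity p M) \<longrightarrow> a mod M = b mod M"
      proof (intro allI impI)
        fix a b assume h: "\<forall>p\<in>prime_factors M. a mod p ^ multiplicity p M = b mod p ^ multiplicity p M"
        show "a mod M = b mod M" by (rule crt_pp[OF M0 h])
      qed
    qed
    then show ?thesis unfolding T_def using False cL M_def by simp
  qed
  have low: "T \<le> m" if f: "faithful_pt_action (UNIV :: ('a ^ 'n ^ 'n) set) (**) m" for m
  proof -
    obtain \<phi> where \<phi>: "inj_on \<phi> (UNIV :: ('a ^ 'n ^ 'n) set)" "\<forall>s\<in>UNIV. \<phi> s \<in> partial_maps_on m"
      "\<forall>s\<in>UNIV. \<forall>t\<in>UNIV. \<phi> (s ** t) = (\<phi> t \<circ>\<^sub>m \<phi> s)"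
      using f unfolding faithful_pt_action_def by blast
    interpret ptrep \<phi> m
    proof
      show "inj_on \<phi> UNIV" by (rule \<phi>(1))
      show "\<forall>A. \<phi> A \<in> partial_maps_on m" using \<phi>(2) by blast
      show "\<forall>A B. \<phi> (A ** B) = (\<phi> B \<circ>\<^sub>m \<phi> A)" using \<phi>(3) by blast
    qed
    have L: "card (Lines :: ('a ^ 'n) set set) * max 1 (spp M) \<le> m" by (rule lower[OF fin g0 M0 gm])
    show ?thesis
    proof (cases "CARD('a) = 2")
      case True
      then have "T = card (Lines :: ('a ^ 'n) set set)" unfolding T_def using cL by simp
      also have "\<dots> \<le> card (Lines :: ('a ^ 'n) set set) * max 1 (spp M)" by simp
      finally show ?thesis using L by simp
    next
      case False
      then have "T = card (Lines :: ('a ^ 'n) set set) * spp M" unfolding T_def spp_def M_def using cL by simp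
      also have "\<dots> \<le> card (Lines :: ('a ^ 'n) set set) * max 1 (spp M)" by simp
      finally show ?thesis using L by simp
    qed
  qed
  have "min_pt_degree (UNIV :: ('a ^ 'n ^ 'n) set) (**) = T"
    unfolding min_pt_degree_def
    by (rule Least_equality[where P = "\<lambda>m. faithful_pt_action (UNIV :: ('a ^ 'n ^ 'n) set) (**) m"]) (use up low in auto)
  then show ?thesis unfolding T_def .
qed


end
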